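(* Let $B$ be a ring, $\phi\in\operatorname{Aut}B$, $\delta:=\phi-\mathrm{id}$, and $\operatorname{pl}(\phi):=\delta(B)\cap B^{\phi}$. (i) If $a\in\operatorname{pl}(\phi)$ is not a zero-divisor of $B$ and $\delta(B)\subset aB$, then $\operatorname{pl}(\phi)=aB^{\phi}$. (ii) Suppose $B$ is a UFD and $\operatorname{pl}(\phi)$ is a principal ideal of $B^{\phi}$. If $a,b\in\operatorname{pl}(\phi)\setminus\{0\}$ and a greatest common divisor $c$ of $a$ and $b$ lies in $B^{\phi}$, then $c\in\operatorname{pl}(\phi)$.
   Context: $B^{\phi}:=\{u\in B\mid\phi(u)=u\}$; $\operatorname{pl}(\phi)$ is an ideal of $B^{\phi}$ (the plinth ideal). *)

theory Defs
  imports "HOL-Computational_Algebra.Factorial_Ring"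
begin

definition ring_aut :: "('a::comm_ring_1 \<Rightarrow> 'a) \<Rightarrow> bool" where
  "ring_aut \<phi> \<longleftrightarrow> bij \<phi> \<and> \<phi> 1 = 1 \<and>
     (\<forall>x y. \<phi> (x + y) = \<phi> x + \<phi> y) \<and> (\<forall>x y. \<phi> (x * y) = \<phi> x * \<phi> y)"

definition fixring :: "('a \<Rightarrow> 'a) \<Rightarrow> 'a set" where
  "fixring \<phi> = {u. \<phi> u = u}"

definition delta :: "('a::ab_group_add \<Rightarrow> 'a) \<Rightarrow> 'a \<Rightarrow> 'a" where
  "delta \<phi> u = \<phi> u - u"

definition plinth :: "('a::ab_group_add \<Rightarrow> 'a) \<Rightarrow> 'a set" where
  "plinth \<phi> = range (delta \<phi>) \<inter> fixring \<phi>"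

definition is_gcd_of :: "'a::comm_semiring_1 \<Rightarrow> 'a \<Rightarrow> 'a \<Rightarrow> bool" where
  "is_gcd_of c a b \<longleftrightarrow> c dvd a \<and> c dvd b \<and> (\<forall>d. d dvd a \<and> d dvd b \<longrightarrow> d dvd c)"

end

theory Submission
  imports Defs
begin

lemma part1:
  fixes \<phi> :: "'a::comm_ring_1 \<Rightarrow> 'a"
  assumes aut: "ring_aut \<phi>" and ap: "a \<in> plinth \<phi>" and nz: "\<forall>x. a * x = 0 \<longrightarrow> x = 0"
    and dl: "range (delta \<phi>) \<subseteq> {a * x | x. True}"
  shows "plinth \<phi> = {a * u | u. u \<in> fixring \<phi>}"
proof -
  have mul: "\<And>x y. \<phi> (x * y) = \<phi> x * \<phi> y" using aut unfolding ring_aut_def by blast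
  obtain y where ay: "a = \<phi> y - y" and af: "\<phi> a = a"
    using ap unfolding plinth_def delta_def fixring_def by auto
  show ?thesis
  proof (intro set_eqI iffI)
    fix x assume "x \<in> plinth \<phi>"
    then obtain w where xw: "x = delta \<phi> w" and xf: "\<phi> x = x"
      unfolding plinth_def fixring_def by auto
    then obtain z where xz: "x = a * z" using dl by blast
    have "a * (\<phi> z - z) = 0"
      using xf xz mul[of a z] af by (simp add: algebra_simps)
    then have "\<phi> z = z" using nz by auto
    then show "x \<in> {a * u | u. u \<in> fixring \<phi>}" using xz unfolding fixring_def by auto
  next
    fix x assume "x \<in> {a * u | u. u \<in> fixring \<phi>}"
    then obtain u where xu: "x = a * u" and uf: "\<phi> u = u" unfolding fixring_def by auto
    have "delta \<phi> (y * u) = x"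
      unfolding delta_def using mul[of y u] uf xu ay by (simp add: algebra_simps)
    have "\<phi> x = x" using mul[of a u] af uf xu by simp
    then have "x \<in> fixring \<phi>" unfolding fixring_def by simp
    moreover have "x \<in> range (delta \<phi>)" using \<open>delta \<phi> (y * u) = x\<close> by (metis rangeI)
    ultimately show "x \<in> plinth \<phi>" unfolding plinth_def by simp
  qed
qed

lemma part2:
  fixes \<psi> :: "'b::{factorial_semiring,idom} \<Rightarrow> 'b"
  assumes aut: "ring_aut \<psi>" and pr: "p \<in> fixring \<psi>" "plinth \<psi> = {p * u | u. u \<in> fixring \<psi>}"
    and a: "a \<in> plinth \<psi> - {0}" and g: "is_gcd_of c a b" "c \<in> fixring \<psi>"
    and b: "b \<in> plinth \<psi> - {0}"
  shows "c \<in> plinth \<psi>"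
proof -
  have mul: "\<And>x y. \<psi> (x * y) = \<psi> x * \<psi> y" using aut unfolding ring_aut_def by blast
  obtain ua where "a = p * ua" using a pr by auto
  then have pa: "p dvd a" and pnz: "p \<noteq> 0" using a by auto
  obtain ub where "b = p * ub" using b pr by auto
  then have pb: "p dvd b" by auto
  have "p dvd c" using g pa pb unfolding is_gcd_of_def by blast
  then obtain w where cw: "c = p * w" by auto
  have pf: "\<psi> p = p" and cf: "\<psi> c = c" using pr g unfolding fixring_def by auto
  have "p * \<psi> w = p * w" using mul[of p w] pf cf cw by simp
  then have "\<psi> w = w" using pnz by simp
  then show ?thesis using cw pr unfolding fixring_def by auto
qed

theorem lemma2p6:
  fixes \<phi> :: "'a::comm_ring_1 \<Rightarrow> 'a" and \<psi> :: "'b::{factorial_semiring,idom} \<Rightarrow> 'b"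
  shows "(\<forall>a. ring_aut \<phi> \<longrightarrow> a \<in> plinth \<phi> \<longrightarrow> (\<forall>x. a * x = 0 \<longrightarrow> x = 0)
            \<longrightarrow> range (delta \<phi>) \<subseteq> {a * x | x. True}
            \<longrightarrow> plinth \<phi> = {a * u | u. u \<in> fixring \<phi>})
       \<and> (\<forall>a b c. ring_aut \<psi>
            \<longrightarrow> (\<exists>p\<in>fixring \<psi>. plinth \<psi> = {p * u | u. u \<in> fixring \<psi>})
            \<longrightarrow> a \<in> plinth \<psi> - {0} \<longrightarrow> b \<in> plinth \<psi> - {0}
            \<longrightarrow> is_gcd_of c a b \<longrightarrow> c \<in> fixring \<psi>
            \<longrightarrow> c \<in> plinth \<psi>)"
proof (intro conjI allI impI)
  fix a assume "ring_aut \<phi>" "a \<in> plinth \<phi>" "\<forall>x. a * x = 0 \<longrightarrow> x = 0"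
    "range (delta \<phi>) \<subseteq> {a * x | x. True}"
  then show "plinth \<phi> = {a * u | u. u \<in> fixring \<phi>}" by (rule part1)
next
  fix a b c assume h: "ring_aut \<psi>" "\<exists>p\<in>fixring \<psi>. plinth \<psi> = {p * u | u. u \<in> fixring \<psi>}"
    "a \<in> plinth \<psi> - {0}" "b \<in> plinth \<psi> - {0}" "is_gcd_of c a b" "c \<in> fixring \<psi>"
  then obtain p where "p \<in> fixring \<psi>" "plinth \<psi> = {p * u | u. u \<in> fixring \<psi>}" by blast
  then show "c \<in> plinth \<psi>" using part2[OF h(1) _ _ h(3) h(5) h(6) h(4)] by blast
qed

end
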